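(* Let $X$ be a complete hyperbolic surface of finite area, $p$ a cusp and $N_p(r)$ a horoball neighborhood of $p$. For positive integers $n,m$, the number of intersection points (with multiplicity) between an $n$-excursion and an $m$-excursion in $N_p(r)$ is at most $2\min(n,m)+2$.
   Context: $N_p(r)$ is the embedded horoball neighborhood of $p$ whose boundary horocycle $\partial N_p(r)$ has length $r$. Lift to the upper half-plane with $p$ at $\infty$, so $N_p(r)$ lifts to $\{\mathrm{Im}\,z\ge h\}$ and the stabilizer of $\infty$ is generated by a translation $z\mapsto z+w$. An $n$-excursion in $N_p(r)$ is a geodesic arc contained in $N_p(r)$ with both endpoints on $\partial N_p(r)$ whose lifted endpoints $z_1,z_2$ satisfy $n\le|\mathrm{Re}\,z_1-\mathrm{Re}\,z_2|/w<n+1$ (winding number $n$ around the cusp). *)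

theory Defs
  imports Complex_Main
begin

text \<open>Model of the cusp neighbourhood N_p(r): the quotient of the closed horoball
  {z. Im z \<ge> h} in the upper half-plane by the translation z \<mapsto> z + w.
  A geodesic arc lying in the horoball with both endpoints on the horocycle Im z = h
  lifts to the part above height h of a Euclidean semicircle centred at a real point c
  with radius R > h (a hyperbolic geodesic).\<close>

definition excursion_arc :: "real \<Rightarrow> real \<Rightarrow> real \<Rightarrow> complex set" where
  "excursion_arc h c R = {z. cmod (z - complex_of_real c) = R \<and> h \<le> Im z}"

definition exc_left :: "real \<Rightarrow> real \<Rightarrow> real \<Rightarrow> complex" where
  "exc_left h c R = Complex (c - sqrt (R\<^sup>2 - h\<^sup>2)) h"

definition exc_right :: "real \<Rightarrow> real \<Rightarrow> real \<Rightarrow> complex" where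
  "exc_right h c R = Complex (c + sqrt (R\<^sup>2 - h\<^sup>2)) h"

definition is_excursion :: "real \<Rightarrow> real \<Rightarrow> nat \<Rightarrow> real \<Rightarrow> real \<Rightarrow> bool" where
  "is_excursion w h n c R \<longleftrightarrow> h < R \<and>
     real n \<le> \<bar>Re (exc_left h c R) - Re (exc_right h c R)\<bar> / w \<and>
     \<bar>Re (exc_left h c R) - Re (exc_right h c R)\<bar> / w < real n + 1"

text \<open>Intersection points with multiplicity between the projections of two lifted arcs
  A, B to the quotient: pairs of points (one on each lifted arc) that are identified
  by the deck group generated by z \<mapsto> z + w.\<close>
definition intersection_pairs :: "real \<Rightarrow> complex set \<Rightarrow> complex set \<Rightarrow> (complex \<times> complex) set" where
  "intersection_pairs w A B =
     {(z1, z2). z1 \<in> A \<and> z2 \<in> B \<and> (\<exists>k::int. z1 = z2 + of_int k * complex_of_real w)}"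

end

theory Submission
  imports Defs
begin

lemma bounds_lemma:
  fixes x y a b R1 R2 h :: real
  assumes e1: "(x-a)^2 + y^2 = R1^2" and e2: "(x-b)^2 + y^2 = R2^2"
    and hy: "h \<le> y" and h0: "h > 0" and r1: "h < R1" and r2: "h < R2"
  shows "\<bar>a-b\<bar> \<le> sqrt (R1^2-h^2) + sqrt (R2^2-h^2) \<and>
         \<bar>sqrt (R1^2-h^2) - sqrt (R2^2-h^2)\<bar> \<le> \<bar>a-b\<bar>"
proof -
  define s1 where "s1 = sqrt (R1^2-h^2)"
  define s2 where "s2 = sqrt (R2^2-h^2)"
  have hh: "h^2 \<le> y^2" using hy h0 by (simp add: power_mono)
  have p1: "R1^2 - h^2 > 0" using r1 h0 by (simp add: power_strict_mono)
  have p2: "R2^2 - h^2 > 0" using r2 h0 by (simp add: power_strict_mono)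
  have s1sq: "s1^2 = R1^2-h^2" using p1 unfolding s1_def by simp
  have s2sq: "s2^2 = R2^2-h^2" using p2 unfolding s2_def by simp
  have s1p: "s1 > 0" using p1 unfolding s1_def by simp
  have s2p: "s2 > 0" using p2 unfolding s2_def by simp
  have "(x-a)^2 \<le> s1^2" using e1 hh s1sq by linarith
  hence xa: "\<bar>x-a\<bar> \<le> s1" using s1p by (metis abs_of_pos power2_le_imp_le abs_ge_zero power2_abs)
  have "(x-b)^2 \<le> s2^2" using e2 hh s2sq by linarith
  hence xb: "\<bar>x-b\<bar> \<le> s2" using s2p by (metis abs_of_pos power2_le_imp_le abs_ge_zero power2_abs)
  have up: "\<bar>a-b\<bar> \<le> s1 + s2" using xa xb by linarith
  have "s1^2 - s2^2 = (b-a)*((x-a)+(x-b))" using e1 e2 s1sq s2sq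
    by (simp add: algebra_simps power2_eq_square)
  hence e: "(s1-s2) * (s1+s2) = (b-a)*((x-a)+(x-b))" by (simp add: power2_eq_square algebra_simps)
  have "\<bar>s1-s2\<bar> * (s1+s2) = \<bar>(s1-s2) * (s1+s2)\<bar>" using s1p s2p by (simp add: abs_mult)
  also have "\<dots> = \<bar>b-a\<bar> * \<bar>(x-a)+(x-b)\<bar>" unfolding e by (simp add: abs_mult)
  also have "\<dots> \<le> \<bar>b-a\<bar> * (s1+s2)"
    using xa xb by (intro mult_left_mono) auto
  finally have "\<bar>s1-s2\<bar> \<le> \<bar>b-a\<bar>" using s1p s2p by simp
  thus ?thesis using up unfolding s1_def s2_def by simp
qed

lemma unique_lemma:
  fixes x y x' y' a b R1 R2 :: real
  assumes e1: "(x-a)^2 + y^2 = R1^2" and e2: "(x-b)^2 + y^2 = R2^2"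
    and e1': "(x'-a)^2 + y'^2 = R1^2" and e2': "(x'-b)^2 + y'^2 = R2^2"
    and y: "y > 0" "y' > 0" and R: "R1 > 0" "R2 > 0"
    and nd: "\<not> (a = b \<and> R1 = R2)"
  shows "x = x' \<and> y = y'"
proof (cases "a = b")
  case True
  hence "R1^2 = R2^2" using e1 e2 by simp
  hence "R1 = R2" using R by (simp add: power2_eq_iff)
  thus ?thesis using True nd by simp
next
  case False
  have "(b-a)*(2*x-a-b) = R1^2-R2^2" using e1 e2 by (simp add: algebra_simps power2_eq_square)
  moreover have "(b-a)*(2*x'-a-b) = R1^2-R2^2" using e1' e2' by (simp add: algebra_simps power2_eq_square)
  ultimately have "(b-a)*(2*x-a-b) = (b-a)*(2*x'-a-b)" by simp
  hence xx: "x = x'" using False by simp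
  hence "y^2 = y'^2" using e1 e1' by simp
  hence "y = y'" using y by (simp add: power2_eq_iff)
  thus ?thesis using xx by simp
qed

lemma count_lemma:
  fixes lo L w :: real and M :: nat
  assumes w: "w > 0" and L: "L < (real M + 1) * w"
  shows "finite {k::int. lo \<le> k*w \<and> k*w \<le> lo+L} \<and> card {k::int. lo \<le> k*w \<and> k*w \<le> lo+L} \<le> M+1"
proof -
  let ?A = "{k::int. lo \<le> k*w \<and> k*w \<le> lo+L}"
  have sub: "?A \<subseteq> {ceiling (lo/w) .. floor ((lo+L)/w)}"
  proof
    fix k assume "k \<in> ?A"
    hence "lo/w \<le> k" "k \<le> (lo+L)/w" using w by (auto simp: field_simps)
    thus "k \<in> {ceiling (lo/w) .. floor ((lo+L)/w)}" by (simp add: ceiling_le_iff le_floor_iff)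
  qed
  have "real_of_int (floor ((lo+L)/w) - ceiling (lo/w)) \<le> (lo+L)/w - lo/w"
    using of_int_floor_le[of "(lo+L)/w"] le_of_int_ceiling[of "lo/w"] by linarith
  also have "\<dots> = L/w" by (simp add: diff_divide_distrib[symmetric])
  also have "\<dots> < real M + 1" using L w by (simp add: field_simps)
  finally have "floor ((lo+L)/w) - ceiling (lo/w) < int M + 1" by linarith
  hence "card {ceiling (lo/w) .. floor ((lo+L)/w)} \<le> M+1" by simp
  thus ?thesis using sub card_mono[OF finite_atLeastAtMost_int sub]
    by (meson finite_atLeastAtMost_int finite_subset le_trans)
qed

theorem lemma4p3:
  fixes w h c1 R1 c2 R2 :: real and n m :: nat
  assumes "w > 0" and "h > 0"
    and "n \<ge> 1" and "m \<ge> 1"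
    and "is_excursion w h n c1 R1"
    and "is_excursion w h m c2 R2"
    and "\<not> (R1 = R2 \<and> (\<exists>k::int. c1 = c2 + of_int k * w))"
  shows "finite (intersection_pairs w (excursion_arc h c1 R1) (excursion_arc h c2 R2))
     \<and> card (intersection_pairs w (excursion_arc h c1 R1) (excursion_arc h c2 R2))
         \<le> 2 * min n m + 2"
proof -
  note w = assms(1) and h0 = assms(2)
  define s1 where "s1 = sqrt (R1^2-h^2)"
  define s2 where "s2 = sqrt (R2^2-h^2)"
  define t where "t = min s1 s2"
  define M where "M = min n m"
  define P where "P = intersection_pairs w (excursion_arc h c1 R1) (excursion_arc h c2 R2)"
  define K where "K = {k::int. s1+s2-2*t \<le> \<bar>c1-c2-k*w\<bar> \<and> \<bar>c1-c2-k*w\<bar> \<le> s1+s2}"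
  have r1: "h < R1" and ex1: "2*s1/w < real n + 1"
    using assms(5) unfolding is_excursion_def exc_left_def exc_right_def s1_def by auto
  have r2: "h < R2" and ex2: "2*s2/w < real m + 1"
    using assms(6) unfolding is_excursion_def exc_left_def exc_right_def s2_def by auto
  have tn: "2*t/w < real n + 1" using ex1 w unfolding t_def
    by (smt (verit, best) divide_right_mono min.cobounded1)
  have tm: "2*t/w < real m + 1" using ex2 w unfolding t_def
    by (smt (verit, best) divide_right_mono min.cobounded2)
  have tM: "2*t < (real M + 1) * w" using tn tm w unfolding M_def
    by (cases "n \<le> m") (auto simp: field_simps)
  let ?C1 = "{k::int. c1-c2-(s1+s2) \<le> k*w \<and> k*w \<le> c1-c2-(s1+s2) + 2*t}"
  let ?C2 = "{k::int. c1-c2+(s1+s2-2*t) \<le> k*w \<and> k*w \<le> c1-c2+(s1+s2-2*t) + 2*t}"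
  have KC: "K \<subseteq> ?C1 \<union> ?C2" unfolding K_def by (auto split: abs_split)
  have c1: "finite ?C1 \<and> card ?C1 \<le> M+1" by (rule count_lemma[OF w tM])
  have c2: "finite ?C2 \<and> card ?C2 \<le> M+1" by (rule count_lemma[OF w tM])
  have finK: "finite K" using KC c1 c2 finite_subset by blast
  have "card K \<le> card (?C1 \<union> ?C2)" using KC c1 c2 by (intro card_mono) auto
  also have "\<dots> \<le> card ?C1 + card ?C2" by (rule card_Un_le)
  finally have cardK: "card K \<le> 2*M+2" using c1 c2 by linarith
  define \<phi> where "\<phi> = (\<lambda>p::complex\<times>complex. Re (fst p - snd p) / w)"
  have R1p: "R1 > 0" and R2p: "R2 > 0" using r1 r2 h0 by auto
  have mem: "\<And>z1 z2. (z1,z2) \<in> P \<Longrightarrow> \<exists>k. z1 = z2 + of_int k * complex_of_real w \<and>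
      (Re z1 - c1)^2 + (Im z1)^2 = R1^2 \<and> (Re z1 - (c2 + k*w))^2 + (Im z1)^2 = R2^2
      \<and> h \<le> Im z1 \<and> Im z2 = Im z1 \<and> Re z2 = Re z1 - k*w"
  proof -
    fix z1 z2 assume "(z1,z2) \<in> P"
    then obtain k::int where a1: "cmod (z1 - complex_of_real c1) = R1" "h \<le> Im z1"
      and a2: "cmod (z2 - complex_of_real c2) = R2" and kk: "z1 = z2 + of_int k * complex_of_real w"
      unfolding P_def intersection_pairs_def excursion_arc_def by auto
    have im: "Im z2 = Im z1" and re: "Re z2 = Re z1 - k*w" using kk by auto
    have q1: "(Re z1 - c1)^2 + (Im z1)^2 = R1^2"
      using a1(1) cmod_power2[of "z1 - complex_of_real c1"] by simp
    have "(Re z2 - c2)^2 + (Im z2)^2 = R2^2"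
      using a2 cmod_power2[of "z2 - complex_of_real c2"] by simp
    hence q2: "(Re z1 - (c2 + k*w))^2 + (Im z1)^2 = R2^2" using im re by (simp add: algebra_simps)
    show "?thesis z1 z2" using kk q1 q2 a1(2) im re by blast
  qed
  have phiK: "\<phi> ` P \<subseteq> of_int ` K"
  proof
    fix r assume "r \<in> \<phi> ` P"
    then obtain z1 z2 where zp: "(z1,z2) \<in> P" and r: "r = \<phi> (z1,z2)" by auto
    from mem[OF zp] obtain k where kk: "z1 = z2 + of_int k * complex_of_real w"
      and q1: "(Re z1 - c1)^2 + (Im z1)^2 = R1^2" and q2: "(Re z1 - (c2 + k*w))^2 + (Im z1)^2 = R2^2"
      and hy: "h \<le> Im z1" by blast
    have "r = k" using r kk w unfolding \<phi>_def by simp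
    moreover have "k \<in> K"
    proof -
      from bounds_lemma[OF q1 q2 hy h0 r1 r2]
      have "\<bar>c1 - (c2+k*w)\<bar> \<le> s1+s2" "\<bar>s1-s2\<bar> \<le> \<bar>c1 - (c2+k*w)\<bar>"
        unfolding s1_def s2_def by auto
      moreover have "\<bar>s1-s2\<bar> = s1+s2-2*t" unfolding t_def by (simp add: min_def)
      ultimately show ?thesis unfolding K_def by (simp add: algebra_simps)
    qed
    ultimately show "r \<in> of_int ` K" by simp
  qed
  have inj: "inj_on \<phi> P"
  proof (rule inj_onI)
    fix p q assume pP: "p \<in> P" and qP: "q \<in> P" and eq: "\<phi> p = \<phi> q"
    obtain z1 z2 where p: "p = (z1,z2)" by (cases p)
    obtain u1 u2 where q: "q = (u1,u2)" by (cases q)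
    from mem[OF pP[unfolded p]] obtain k where kk: "z1 = z2 + of_int k * complex_of_real w"
      and q1: "(Re z1 - c1)^2 + (Im z1)^2 = R1^2" and q2: "(Re z1 - (c2 + k*w))^2 + (Im z1)^2 = R2^2"
      and hy: "h \<le> Im z1" and im: "Im z2 = Im z1" and re: "Re z2 = Re z1 - k*w" by blast
    from mem[OF qP[unfolded q]] obtain j where jj: "u1 = u2 + of_int j * complex_of_real w"
      and q1': "(Re u1 - c1)^2 + (Im u1)^2 = R1^2" and q2': "(Re u1 - (c2 + j*w))^2 + (Im u1)^2 = R2^2"
      and hy': "h \<le> Im u1" and im': "Im u2 = Im u1" and re': "Re u2 = Re u1 - j*w" by blast
    have "real_of_int k = real_of_int j" using eq kk jj w unfolding \<phi>_def p q by simp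
    hence kj: "k = j" by simp
    have nd: "\<not> (c1 = c2 + k*w \<and> R1 = R2)" using assms(7) by auto
    have "Re z1 = Re u1 \<and> Im z1 = Im u1"
      using unique_lemma[OF q1 q2 q1' q2'[folded kj] _ _ R1p R2p nd] hy hy' h0 by linarith
    hence "z1 = u1" by (simp add: complex_eq_iff)
    moreover have "z2 = u2" using \<open>z1 = u1\<close> im im' re re' kj
      by (simp add: complex_eq_iff)
    ultimately show "p = q" using p q by simp
  qed
  have finimg: "finite (\<phi> ` P)" using phiK finK finite_subset by blast
  have finP: "finite P" using finite_imageD[OF finimg inj] .
  have "card P = card (\<phi> ` P)" using card_image[OF inj] by simp
  also have "\<dots> \<le> card (of_int ` K :: real set)" using phiK finK by (intro card_mono) auto
  also have "\<dots> \<le> card K" using finK card_image_le by blast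
  finally show ?thesis using finP cardK unfolding P_def M_def by simp
qed

end
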